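(* Fix $a\in(0,1)$. There exists $d_0=d_0(a)$ such that the following holds for every $d\ge d_0$ and every sufficiently large even integer $n$. Let $G=(V,E)$ be a $d$-regular graph on $n$ vertices. Then for every integer $t\in[d^{a/100},d^{1/10}]$ there exists a collection $(A_i,B_i)_{i=1}^t$ of balanced bipartitions of $V$ (i.e. $V=A_i\sqcup B_i$, $|A_i|=|B_i|=n/2$) such that, writing $G_i$ for the spanning subgraph of $G$ consisting of the edges of $G$ with one endpoint in $A_i$ and the other in $B_i$: (R1) for all $1\le i\le t$, $\frac d2-d^{2/3}\le\delta(G_i)\le\Delta(G_i)\le\frac d2+d^{2/3}$; (R2) for every $e\in E(G)$, the number of indices $i\in[t]$ with $e\in E(G_i)$ lies in $[\frac t2-t^{2/3},\frac t2+t^{2/3}]$.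
   Context: $\delta(\cdot)$ and $\Delta(\cdot)$ denote minimum and maximum degree. *)

theory Defs
  imports Complex_Main
begin

definition simple_graph :: "nat set \<Rightarrow> (nat \<Rightarrow> nat \<Rightarrow> bool) \<Rightarrow> bool" where
  "simple_graph V E \<longleftrightarrow> finite V \<and> (\<forall>u v. E u v \<longrightarrow> u \<in> V \<and> v \<in> V)
     \<and> (\<forall>u v. E u v \<longrightarrow> E v u) \<and> (\<forall>v. \<not> E v v)"

definition degree :: "nat set \<Rightarrow> (nat \<Rightarrow> nat \<Rightarrow> bool) \<Rightarrow> nat \<Rightarrow> nat" where
  "degree V E v = card {u \<in> V. E v u}"

definition regular :: "nat set \<Rightarrow> (nat \<Rightarrow> nat \<Rightarrow> bool) \<Rightarrow> nat \<Rightarrow> bool" where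
  "regular V E d \<longleftrightarrow> (\<forall>v \<in> V. degree V E v = d)"

definition cut_edges :: "(nat \<Rightarrow> nat \<Rightarrow> bool) \<Rightarrow> nat set \<Rightarrow> nat set \<Rightarrow> nat \<Rightarrow> nat \<Rightarrow> bool" where
  "cut_edges E A B u v \<longleftrightarrow> E u v \<and> ((u \<in> A \<and> v \<in> B) \<or> (u \<in> B \<and> v \<in> A))"

definition balanced_bipartition :: "nat set \<Rightarrow> nat set \<Rightarrow> nat set \<Rightarrow> bool" where
  "balanced_bipartition V A B \<longleftrightarrow> A \<union> B = V \<and> A \<inter> B = {}
     \<and> 2 * card A = card V \<and> 2 * card B = card V"

definition min_degree :: "nat set \<Rightarrow> (nat \<Rightarrow> nat \<Rightarrow> bool) \<Rightarrow> nat" where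
  "min_degree V E = Min (degree V E ` V)"

definition max_degree :: "nat set \<Rightarrow> (nat \<Rightarrow> nat \<Rightarrow> bool) \<Rightarrow> nat" where
  "max_degree V E = Max (degree V E ` V)"

end

theory Submission
  imports Defs "HOL-Library.FuncSet" "HOL-Probability.Hoeffding" "HOL-Real_Asymp.Real_Asymp"
begin


definition Om :: "'v set \<Rightarrow> ('v \<Rightarrow> bool) set" where "Om I = PiE I (\<lambda>_. UNIV)"

definition detd :: "'v set \<Rightarrow> 'v set \<Rightarrow> ('v\<Rightarrow>bool) set \<Rightarrow> bool" where
 "detd I K A \<longleftrightarrow> (\<forall>f\<in>Om I. \<forall>g\<in>Om I. (\<forall>k\<in>K. f k = g k) \<longrightarrow> (f\<in>A \<longleftrightarrow> g\<in>A))"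

lemma Om_finite: "finite I \<Longrightarrow> finite (Om I)"
  unfolding Om_def by (simp add: finite_PiE)

lemma Om_nonempty: "Om I \<noteq> {}"
  unfolding Om_def by (simp add: PiE_eq_empty_iff)

definition mrg :: "'v set \<Rightarrow> ('v\<Rightarrow>bool) \<Rightarrow> ('v\<Rightarrow>bool) \<Rightarrow> ('v\<Rightarrow>bool)" where
  "mrg K f g = (\<lambda>k. if k \<in> K then f k else g k)"

lemma mrg_Om: "f \<in> Om I \<Longrightarrow> g \<in> Om I \<Longrightarrow> mrg K f g \<in> Om I"
  unfolding Om_def mrg_def PiE_def extensional_def by auto

lemma indep_card:
  assumes "detd I K A" "detd I K' B" "K \<inter> K' = {}" "A \<subseteq> Om I" "B \<subseteq> Om I"
  shows "card (A \<inter> B) * card (Om I) = card A * card B"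
proof -
  define \<Phi> where "\<Phi> = (\<lambda>(f,g). (mrg K f g, mrg K g f))"
  have inv: "\<Phi> (\<Phi> p) = p" for p
    by (cases p) (auto simp: \<Phi>_def mrg_def)
  have m1: "\<Phi> ` (A \<times> B) \<subseteq> (A \<inter> B) \<times> Om I"
  proof
    fix q assume "q \<in> \<Phi> ` (A \<times> B)"
    then obtain f g where fg: "f \<in> A" "g \<in> B" "q = (mrg K f g, mrg K g f)"
      by (auto simp: \<Phi>_def)
    have fo: "f \<in> Om I" "g \<in> Om I" using fg assms by auto
    have "mrg K f g \<in> A"
      using assms(1) fo mrg_Om[OF fo] fg(1) unfolding detd_def by (metis mrg_def)
    moreover have "mrg K f g \<in> B"
    proof -
      have "\<forall>k\<in>K'. mrg K f g k = g k" using assms(3) by (auto simp: mrg_def)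
      thus ?thesis using assms(2) fo mrg_Om[OF fo] fg(2) unfolding detd_def by metis
    qed
    ultimately show "q \<in> (A \<inter> B) \<times> Om I" using fg mrg_Om[OF fo(2,1)] by auto
  qed
  have m2: "\<Phi> ` ((A \<inter> B) \<times> Om I) \<subseteq> A \<times> B"
  proof
    fix q assume "q \<in> \<Phi> ` ((A \<inter> B) \<times> Om I)"
    then obtain f g where fg: "f \<in> A" "f \<in> B" "g \<in> Om I" "q = (mrg K f g, mrg K g f)"
      by (auto simp: \<Phi>_def)
    have fo: "f \<in> Om I" "g \<in> Om I" using fg assms by auto
    have "mrg K f g \<in> A"
      using assms(1) fo mrg_Om[OF fo] fg(1) unfolding detd_def by (metis mrg_def)
    moreover have "mrg K g f \<in> B"
    proof -
      have "\<forall>k\<in>K'. mrg K g f k = f k" using assms(3) by (auto simp: mrg_def)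
      thus ?thesis using assms(2) fo mrg_Om[OF fo(2,1)] fg(2) unfolding detd_def by metis
    qed
    ultimately show "q \<in> A \<times> B" using fg by auto
  qed
  have "bij_betw \<Phi> (A \<times> B) ((A \<inter> B) \<times> Om I)"
    by (rule bij_betw_byWitness[where f'=\<Phi>]) (use inv m1 m2 in auto)
  hence "card (A \<times> B) = card ((A \<inter> B) \<times> Om I)" by (rule bij_betw_same_card)
  thus ?thesis by (simp add: card_cartesian_product mult.commute)
qed

lemma detd_Good:
  assumes "\<And>y. y \<in> S \<Longrightarrow> detd I (J y) (A y)"
  shows "detd I (\<Union>y\<in>S. J y) {f\<in>Om I. \<forall>y\<in>S. f \<notin> A y}"
  unfolding detd_def
proof (intro ballI impI)
  fix f g assume fg: "f \<in> Om I" "g \<in> Om I" "\<forall>k\<in>(\<Union>y\<in>S. J y). f k = g k"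
  have "f \<in> A y \<longleftrightarrow> g \<in> A y" if y: "y \<in> S" for y
  proof -
    have "\<forall>k\<in>J y. f k = g k" using fg(3) y by auto
    thus ?thesis using assms[OF y] fg(1,2) unfolding detd_def by blast
  qed
  thus "f \<in> {f \<in> Om I. \<forall>y\<in>S. f \<notin> A y} \<longleftrightarrow> g \<in> {f \<in> Om I. \<forall>y\<in>S. f \<notin> A y}"
    using fg(1,2) by auto
qed

lemma detd_Int_Om: "detd I K A \<Longrightarrow> detd I K (A \<inter> Om I)"
  unfolding detd_def by (simp only: Int_iff) blast

lemma lll:
  fixes Aev :: "'x \<Rightarrow> ('v\<Rightarrow>bool) set" and J :: "'x \<Rightarrow> 'v set" and \<Gamma> :: "'x \<Rightarrow> 'x set"
  assumes fin: "finite I" "finite X"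
  and det: "\<And>x. x\<in>X \<Longrightarrow> detd I (J x) (Aev x)"
  and sep: "\<And>x y. x\<in>X \<Longrightarrow> y\<in>X \<Longrightarrow> y \<notin> \<Gamma> x \<Longrightarrow> y \<noteq> x \<Longrightarrow> J x \<inter> J y = {}"
  and Gfin: "\<And>x. x \<in> X \<Longrightarrow> finite (\<Gamma> x) \<and> card (\<Gamma> x) \<le> D"
  and prob: "\<And>x. x\<in>X \<Longrightarrow> real (card (Aev x \<inter> Om I)) \<le> p * real (card (Om I))"
  and pD: "p * (real D + 2)^2 \<le> 1"
  shows "\<exists>f\<in>Om I. \<forall>x\<in>X. f \<notin> Aev x"
proof -
  define Good where "Good S = {f\<in>Om I. \<forall>y\<in>S. f \<notin> Aev y}" for S
  define q :: real where "q = 1 / (real D + 2)"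
  have q0: "0 < q" "q < 1" by (auto simp: q_def)
  have pq: "p \<le> q * (1-q)^D"
  proof -
    have "1 + real D * (-q) \<le> (1 + (-q))^D"
      by (rule Bernoulli_inequality) (use q0 in auto)
    hence "q * (1 - real D * q) \<le> q * (1-q)^D"
      using q0 by (intro mult_left_mono) auto
    moreover have "q * (1 - real D * q) = 2 / (real D + 2)^2"
      by (simp add: q_def field_simps power2_eq_square)
    moreover have "p \<le> 1 / (real D + 2)^2" using pD by (simp add: field_simps)
    moreover have "1 / (real D + 2)^2 \<le> 2 / (real D + 2)^2"
      by (simp add: divide_right_mono)
    ultimately show ?thesis by linarith
  qed
  have GoodOm: "Good S \<subseteq> Om I" for S by (auto simp: Good_def)
  have Goodfin: "finite (Good S)" for S using Om_finite[OF fin(1)] GoodOm finite_subset by blast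
  have main: "\<forall>S. S \<subseteq> X \<and> card S = m \<longrightarrow> (0 < card (Good S) \<and>
      (\<forall>x\<in>X-S. real (card (Aev x \<inter> Good S)) \<le> q * real (card (Good S))))" for m
  proof (induction m rule: less_induct)
    case (less m)
    have step: "(1-q) * real (card (Good S')) \<le> real (card (Good (insert y S')))"
      if "S' \<subseteq> X" "card S' < m" "y \<in> X - S'" for S' y
    proof -
      have IH: "real (card (Aev y \<inter> Good S')) \<le> q * real (card (Good S'))"
        using less.IH[OF that(2)] that by blast
      have "Good (insert y S') = Good S' - (Aev y \<inter> Good S')"
        by (auto simp: Good_def)
      hence "card (Good (insert y S')) = card (Good S') - card (Aev y \<inter> Good S')"
        using Goodfin by (simp add: card_Diff_subset finite_subset)
      moreover have "card (Aev y \<inter> Good S') \<le> card (Good S')"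
        using Goodfin by (intro card_mono) auto
      ultimately have "real (card (Good (insert y S'))) = real (card (Good S')) - real (card (Aev y \<inter> Good S'))"
        by simp
      thus ?thesis using IH by (simp add: algebra_simps)
    qed
    show ?case
    proof (intro allI impI)
      fix S assume S: "S \<subseteq> X \<and> card S = m"
      have finS: "finite S" using S fin(2) finite_subset by blast
      have pos: "0 < card (Good S)"
      proof (cases "S = {}")
        case True
        hence "Good S = Om I" by (auto simp: Good_def)
        thus ?thesis using Om_finite[OF fin(1)] Om_nonempty by (simp add: card_gt_0_iff)
      next
        case False
        then obtain y where y: "y \<in> S" by auto
        have "card S > 0" using y finS by (auto simp: card_gt_0_iff)
        hence c: "card (S - {y}) < m" using S y finS by simp
        have "(1-q) * real (card (Good (S - {y}))) \<le> real (card (Good (insert y (S - {y}))))"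
          by (rule step) (use S y c in auto)
        moreover have "0 < card (Good (S - {y}))"
        proof -
          have sx: "S - {y} \<subseteq> X" using S by auto
          show ?thesis using spec[OF less.IH[OF c], of "S - {y}"] sx by simp
        qed
        moreover have "insert y (S - {y}) = S" using y by auto
        ultimately have "0 < real (card (Good S))"
          using q0 by (smt (verit, best) of_nat_0_less_iff mult_pos_pos)
        thus ?thesis by simp
      qed
      have bnd: "real (card (Aev x \<inter> Good S)) \<le> q * real (card (Good S))" if x: "x \<in> X - S" for x
      proof -
        define S1 where "S1 = S \<inter> \<Gamma> x"
        define S2 where "S2 = S - \<Gamma> x"
        have peel: "U \<subseteq> S1 \<Longrightarrow> (1-q)^card U * real (card (Good S2)) \<le> real (card (Good (S2 \<union> U)))"
          if "finite U" for U
          using that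
        proof (induction U rule: finite_induct)
          case empty thus ?case by simp
        next
          case (insert y U)
          have sub: "S2 \<union> U \<subseteq> S - {y}" using insert by (auto simp: S1_def S2_def)
          have c: "card (S2 \<union> U) < m"
          proof -
            have "card (S2 \<union> U) \<le> card (S - {y})" using sub finS by (intro card_mono) auto
            also have "\<dots> < card S" using insert finS by (intro card_Diff1_less) (auto simp: S1_def)
            finally show ?thesis using S by simp
          qed
          have "(1-q) * real (card (Good (S2 \<union> U))) \<le> real (card (Good (insert y (S2 \<union> U))))"
            by (rule step) (use S sub c insert in \<open>auto simp: S1_def\<close>)
          moreover have "(1-q)^card U * real (card (Good S2)) \<le> real (card (Good (S2 \<union> U)))"
            using insert by auto
          ultimately have "(1-q) * ((1-q)^card U * real (card (Good S2))) \<le> real (card (Good (insert y (S2 \<union> U))))"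
            using q0 by (smt (verit) mult_left_mono)
          thus ?case using insert by simp
        qed
        have "(1-q)^card S1 * real (card (Good S2)) \<le> real (card (Good (S2 \<union> S1)))"
          by (rule peel) (use finS in \<open>auto simp: S1_def\<close>)
        moreover have "S2 \<union> S1 = S" by (auto simp: S1_def S2_def)
        moreover have "(1-q)^D \<le> (1-q)^card S1"
        proof -
          have "card S1 \<le> card (\<Gamma> x)" using Gfin[of x] x by (intro card_mono) (auto simp: S1_def)
          hence "card S1 \<le> D" using Gfin[of x] x by auto
          thus ?thesis using q0 by (intro power_decreasing) auto
        qed
        ultimately have G: "(1-q)^D * real (card (Good S2)) \<le> real (card (Good S))"
          by (smt (verit) mult_right_mono of_nat_0_le_iff)
        have "detd I (J x) (Aev x \<inter> Om I)" using det x by (intro detd_Int_Om) auto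
        moreover have "detd I (\<Union>y\<in>S2. J y) (Good S2)"
          unfolding Good_def by (rule detd_Good) (use det S in \<open>auto simp: S2_def\<close>)
        moreover have "J x \<inter> (\<Union>y\<in>S2. J y) = {}"
          using sep x S by (force simp: S2_def)
        ultimately have "card ((Aev x \<inter> Om I) \<inter> Good S2) * card (Om I) = card (Aev x \<inter> Om I) * card (Good S2)"
          by (intro indep_card) (auto simp: Good_def)
        moreover have "(Aev x \<inter> Om I) \<inter> Good S2 = Aev x \<inter> Good S2" by (auto simp: Good_def)
        ultimately have eq: "real (card (Aev x \<inter> Good S2)) * real (card (Om I)) = real (card (Aev x \<inter> Om I)) * real (card (Good S2))"
          by (metis of_nat_mult)
        have Ompos: "0 < real (card (Om I))" using Om_finite[OF fin(1)] Om_nonempty by (simp add: card_gt_0_iff)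
        have "real (card (Aev x \<inter> Good S2)) * real (card (Om I)) \<le> (p * real (card (Good S2))) * real (card (Om I))"
        proof -
          have "real (card (Aev x \<inter> Om I)) * real (card (Good S2)) \<le> (p * real (card (Om I))) * real (card (Good S2))"
            using prob[of x] x by (intro mult_right_mono) auto
          thus ?thesis using eq by (simp add: algebra_simps)
        qed
        hence A2: "real (card (Aev x \<inter> Good S2)) \<le> p * real (card (Good S2))"
          using Ompos by simp
        have "card (Aev x \<inter> Good S) \<le> card (Aev x \<inter> Good S2)"
          using Goodfin by (intro card_mono) (auto simp: Good_def S2_def)
        hence "real (card (Aev x \<inter> Good S)) \<le> p * real (card (Good S2))" using A2 by linarith
        also have "\<dots> \<le> q * (1-q)^D * real (card (Good S2))"
          using pq by (intro mult_right_mono) auto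
        also have "\<dots> \<le> q * real (card (Good S))"
          using G q0 by (simp add: mult.assoc mult_left_mono)
        finally show ?thesis .
      qed
      show "0 < card (Good S) \<and> (\<forall>x\<in>X-S. real (card (Aev x \<inter> Good S)) \<le> q * real (card (Good S)))"
        using pos bnd by blast
    qed
  qed
  have "0 < card (Good X)" using main[of "card X"] by blast
  then obtain f where "f \<in> Good X" by (metis card.empty less_irrefl all_not_in_conv)
  thus ?thesis by (auto simp: Good_def)
qed



lemma sum_flip:
  fixes \<phi> :: "'m \<Rightarrow> 'v" and c :: "('v\<Rightarrow>bool) \<Rightarrow> 'm \<Rightarrow> bool" and w :: "bool \<Rightarrow> real"
  assumes "finite M"
  shows "inj_on \<phi> M \<Longrightarrow> \<phi> ` M \<subseteq> I \<Longrightarrow> (\<And>f k b. k \<in> \<phi> ` M \<Longrightarrow> c (f(k:=b)) = c f) \<Longrightarrow>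
    (\<Sum>f\<in>Om I. \<Prod>m\<in>M. w (f (\<phi> m) = c f m)) = real (card (Om I)) * ((w True + w False)/2)^card M"
  using assms
proof (induction M rule: finite_induct)
  case empty thus ?case by simp
next
  case (insert m M)
  define k where "k = \<phi> m"
  have kI: "k \<in> I" using insert by (auto simp: k_def)
  have kM: "k \<notin> \<phi> ` M" using insert by (auto simp: k_def)
  define F where "F f = (\<Prod>m\<in>M. w (f (\<phi> m) = c f m))" for f
  define fl where "fl f = f(k := \<not> f k)" for f :: "'v \<Rightarrow> bool"
  have flOm: "f \<in> Om I \<Longrightarrow> fl f \<in> Om I" for f using kI unfolding Om_def fl_def PiE_def extensional_def by auto
  have flfl: "fl (fl f) = f" for f by (auto simp: fl_def)
  have cfl: "c (fl f) = c f" for f unfolding fl_def by (rule insert.prems(3)) (auto simp: k_def)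
  have Ffl: "F (fl f) = F f" for f
  proof -
    have "c (fl f) = c (f)" by (rule cfl)
    moreover have "fl f (\<phi> x) = f (\<phi> x)" if "x \<in> M" for x using kM that by (auto simp: fl_def)
    ultimately show ?thesis unfolding F_def by (intro prod.cong) auto
  qed
  have IH: "(\<Sum>f\<in>Om I. F f) = real (card (Om I)) * ((w True + w False)/2)^card M"
    unfolding F_def by (rule insert.IH) (use insert.prems in auto)
  have split: "(\<Prod>x\<in>insert m M. w (f (\<phi> x) = c f x)) = w (f k = c f m) * F f" for f
    using insert by (simp add: F_def k_def)
  have re: "(\<Sum>f\<in>Om I. w (f k = c f m) * F f) = (\<Sum>f\<in>Om I. w (\<not> f k = c f m) * F f)"
  proof (rule sum.reindex_bij_witness[where i=fl and j=fl])
    fix f assume "f \<in> Om I" thus "fl f \<in> Om I" "fl (fl f) = f" by (auto simp: flOm flfl)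
  next
    fix f assume "f \<in> Om I"
    thus "fl f \<in> Om I" "fl (fl f) = f" by (auto simp: flOm flfl)
    show "w (\<not> fl f k = c (fl f) m) * F (fl f) = w (f k = c f m) * F f"
    proof -
      have "fl f k = (\<not> f k)" by (simp add: fl_def)
      thus ?thesis by (simp add: Ffl cfl)
    qed
  qed
  have wsum: "w (b = x) + w (\<not> b = x) = w True + w False" for b x by (cases "b = x") auto
  have "2 * (\<Sum>f\<in>Om I. w (f k = c f m) * F f) = (\<Sum>f\<in>Om I. (w (f k = c f m) + w (\<not> f k = c f m)) * F f)"
    using re by (simp add: sum.distrib distrib_right)
  also have "\<dots> = (w True + w False) * (\<Sum>f\<in>Om I. F f)"
    by (simp only: wsum sum_distrib_left)
  finally have "(\<Sum>f\<in>Om I. w (f k = c f m) * F f) = ((w True + w False)/2) * (\<Sum>f\<in>Om I. F f)"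
    by simp
  thus ?case using insert IH by (simp add: split)
qed

lemma prod_if_one: "finite M \<Longrightarrow> (\<Prod>m\<in>M. if P m then (a::real) else 1) = a ^ card {m\<in>M. P m}"
  by (simp add: prod.inter_filter[symmetric])

lemma half_exp_bound:
  fixes h :: real assumes "h \<ge> 0"
  shows "(exp h + 1) / 2 \<le> exp (h/2 + h^2/8)"
proof -
  have "-h * (1/2) + ln (1 + (1/2) * (exp h - 1)) \<le> h^2/8"
    by (rule Hoeffdings_lemma_aux) (use assms in auto)
  moreover have "ln ((exp h + 1)/2) = ln (1 + (1/2) * (exp h - 1))"
    by (rule arg_cong[where f=ln]) (simp add: field_simps)
  ultimately have "ln ((exp h + 1)/2) \<le> h/2 + h^2/8" by linarith
  moreover have "(exp h + 1)/2 > 0" by (simp add: add_pos_pos)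
  ultimately show ?thesis by (metis exp_le_cancel_iff exp_ln)
qed

lemma chernoff_up:
  fixes \<phi> :: "'m \<Rightarrow> 'v" and c :: "('v\<Rightarrow>bool) \<Rightarrow> 'm \<Rightarrow> bool" and r :: real
  assumes fin: "finite I" "finite M" and inj: "inj_on \<phi> M" and sub: "\<phi> ` M \<subseteq> I"
    and inv: "\<And>f k b. k \<in> \<phi> ` M \<Longrightarrow> c (f(k:=b)) = c f"
    and lam: "r > 0" and ne: "M \<noteq> {}"
  shows "real (card {f\<in>Om I. real (card M)/2 + r \<le> real (card {m\<in>M. f (\<phi> m) = c f m})})
     \<le> real (card (Om I)) * exp (-2*r^2 / real (card M))"
proof -
  define \<mu> where "\<mu> = real (card M)"
  have mu: "\<mu> > 0" using fin ne by (simp add: \<mu>_def card_gt_0_iff)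
  define h where "h = 4*r/\<mu>"
  have h0: "h > 0" using mu lam by (simp add: h_def)
  define cnt where "cnt f = card {m\<in>M. f (\<phi> m) = c f m}" for f
  define T where "T = {f\<in>Om I. \<mu>/2 + r \<le> real (cnt f)}"
  have fOm: "finite (Om I)" by (rule Om_finite[OF fin(1)])
  have ex: "exp (h * real (cnt f)) = (\<Prod>m\<in>M. (\<lambda>b. if b then exp h else 1) (f (\<phi> m) = c f m))" for f
    by (simp add: prod_if_one[OF fin(2)] cnt_def exp_of_nat_mult[symmetric] mult.commute)
  have S: "(\<Sum>f\<in>Om I. exp (h * real (cnt f))) = real (card (Om I)) * ((exp h + 1)/2)^card M"
    unfolding ex by (subst sum_flip[OF fin(2) inj sub]) (use inv in auto)
  have "real (card T) * exp (h * (\<mu>/2 + r)) = (\<Sum>f\<in>T. exp (h * (\<mu>/2 + r)))" by simp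
  also have "\<dots> \<le> (\<Sum>f\<in>T. exp (h * real (cnt f)))"
    by (intro sum_mono) (use h0 in \<open>auto simp: T_def\<close>)
  also have "\<dots> \<le> (\<Sum>f\<in>Om I. exp (h * real (cnt f)))"
    by (intro sum_mono2 fOm) (auto simp: T_def)
  also have "\<dots> \<le> real (card (Om I)) * exp (h/2 + h^2/8) ^ card M"
    unfolding S by (intro mult_left_mono power_mono half_exp_bound) (use h0 in auto)
  also have "\<dots> = real (card (Om I)) * exp (\<mu> * (h/2 + h^2/8))"
    by (simp add: \<mu>_def exp_of_nat_mult[symmetric])
  finally have "real (card T) \<le> real (card (Om I)) * exp (\<mu> * (h/2 + h^2/8)) / exp (h * (\<mu>/2 + r))"
    by (simp add: field_simps)
  also have "\<dots> = real (card (Om I)) * exp (\<mu> * (h/2 + h^2/8) - h * (\<mu>/2 + r))"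
    by (simp add: exp_diff)
  also have "\<mu> * (h/2 + h^2/8) - h * (\<mu>/2 + r) = -2*r^2/\<mu>"
    using mu by (simp add: h_def field_simps power2_eq_square)
  finally show ?thesis by (simp add: T_def cnt_def \<mu>_def)
qed

lemma chernoff:
  fixes \<phi> :: "'m \<Rightarrow> 'v" and c :: "('v\<Rightarrow>bool) \<Rightarrow> 'm \<Rightarrow> bool" and r :: real
  assumes fin: "finite I" "finite M" and inj: "inj_on \<phi> M" and sub: "\<phi> ` M \<subseteq> I"
    and inv: "\<And>f k b. k \<in> \<phi> ` M \<Longrightarrow> c (f(k:=b)) = c f"
    and lam: "r > 0" and ne: "M \<noteq> {}"
  shows "real (card {f\<in>Om I. r \<le> \<bar>real (card {m\<in>M. f (\<phi> m) = c f m}) - real (card M)/2\<bar>})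
     \<le> 2 * real (card (Om I)) * exp (-2*r^2 / real (card M))"
proof -
  define U1 where "U1 = {f\<in>Om I. real (card M)/2 + r \<le> real (card {m\<in>M. f (\<phi> m) = c f m})}"
  define U2 where "U2 = {f\<in>Om I. real (card M)/2 + r \<le> real (card {m\<in>M. f (\<phi> m) = (\<lambda>f m. \<not> c f m) f m})}"
  have c2: "card {m\<in>M. f (\<phi> m) = (\<not> c f m)} = card M - card {m\<in>M. f (\<phi> m) = c f m}" for f
  proof -
    have "{m\<in>M. f (\<phi> m) = (\<not> c f m)} = M - {m\<in>M. f (\<phi> m) = c f m}" by auto
    thus ?thesis using fin(2) by (simp add: card_Diff_subset)
  qed
  have le: "card {m\<in>M. f (\<phi> m) = c f m} \<le> card M" for f using fin(2) by (intro card_mono) auto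
  have "{f\<in>Om I. r \<le> \<bar>real (card {m\<in>M. f (\<phi> m) = c f m}) - real (card M)/2\<bar>} \<subseteq> U1 \<union> U2"
  proof
    fix f assume "f \<in> {f\<in>Om I. r \<le> \<bar>real (card {m\<in>M. f (\<phi> m) = c f m}) - real (card M)/2\<bar>}"
    thus "f \<in> U1 \<union> U2" using c2[of f] le[of f] by (auto simp: U1_def U2_def abs_if of_nat_diff split: if_splits)
  qed
  hence "card {f\<in>Om I. r \<le> \<bar>real (card {m\<in>M. f (\<phi> m) = c f m}) - real (card M)/2\<bar>} \<le> card (U1 \<union> U2)"
    by (intro card_mono) (auto simp: U1_def U2_def intro: finite_subset[OF _ Om_finite[OF fin(1)]])
  also have "\<dots> \<le> card U1 + card U2" by (rule card_Un_le)
  finally have A: "real (card {f\<in>Om I. r \<le> \<bar>real (card {m\<in>M. f (\<phi> m) = c f m}) - real (card M)/2\<bar>}) \<le> real (card U1) + real (card U2)"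
    by linarith
  have "real (card U1) \<le> real (card (Om I)) * exp (-2*r^2 / real (card M))"
    unfolding U1_def by (rule chernoff_up[OF fin inj sub inv lam ne])
  moreover have "real (card U2) \<le> real (card (Om I)) * exp (-2*r^2 / real (card M))"
    unfolding U2_def by (rule chernoff_up[OF fin inj sub _ lam ne]) (use inv in auto)
  ultimately show ?thesis using A by linarith
qed



definition invol :: "nat set \<Rightarrow> (nat \<Rightarrow> nat) \<Rightarrow> bool" where
  "invol V \<pi> \<longleftrightarrow> (\<forall>v\<in>V. \<pi> v \<in> V \<and> \<pi> v \<noteq> v \<and> \<pi> (\<pi> v) = v)"

lemma invol_exists: "finite W \<Longrightarrow> even (card W) \<Longrightarrow> \<exists>\<pi>. invol W \<pi>"
proof (induction "card W" arbitrary: W rule: less_induct)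
  case less
  show ?case
  proof (cases "W = {}")
    case True thus ?thesis by (auto simp: invol_def)
  next
    case False
    then obtain a where a: "a \<in> W" by auto
    have "card W > 0" using False less.prems by (simp add: card_gt_0_iff)
    hence c2: "card W \<ge> 2" using less.prems(2) by (cases "card W = 1") auto
    have "card (W - {a}) > 0" using c2 a less.prems(1) by simp
    then obtain b where b: "b \<in> W" "b \<noteq> a" by (metis card_gt_0_iff ex_in_conv DiffE singletonI)
    define W' where "W' = W - {a,b}"
    have cW': "card W' = card W - 2" using a b less.prems(1) by (simp add: W'_def card_Diff_subset)
    have "card W' < card W" "even (card W')" "finite W'" using cW' c2 less.prems by (auto simp: W'_def)
    then obtain \<pi> where \<pi>: "invol W' \<pi>" using less.hyps by blast
    define \<pi>' where "\<pi>' = \<pi>(a := b, b := a)"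
    have "invol W \<pi>'"
      unfolding invol_def
    proof
      fix v assume v: "v \<in> W"
      show "\<pi>' v \<in> W \<and> \<pi>' v \<noteq> v \<and> \<pi>' (\<pi>' v) = v"
      proof (cases "v = a \<or> v = b")
        case True thus ?thesis using a b by (auto simp: \<pi>'_def)
      next
        case False
        hence "v \<in> W'" using v by (auto simp: W'_def)
        thus ?thesis using \<pi> False unfolding invol_def \<pi>'_def W'_def by auto
      qed
    qed
    thus ?thesis by blast
  qed
qed

lemma invol_good_aux:
  assumes sg: "simple_graph V E" and reg: "\<And>v. v\<in>V \<Longrightarrow> card {u\<in>V. E v u} \<le> d"
    and n: "2*d + 3 \<le> card V"
  shows "invol V \<pi> \<Longrightarrow> card {v\<in>V. E v (\<pi> v)} \<le> k \<Longrightarrow> \<exists>\<pi>'. invol V \<pi>' \<and> (\<forall>v\<in>V. \<not> E v (\<pi>' v))"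
proof (induction k arbitrary: \<pi>)
  have finV: "finite V" using sg by (simp add: simple_graph_def)
  {
    case 0
    hence "{v\<in>V. E v (\<pi> v)} = {}" using finV by simp
    thus ?case using 0 by blast
  next
    case (Suc k)
    show ?case
    proof (cases "{v\<in>V. E v (\<pi> v)} = {}")
      case True thus ?thesis using Suc by blast
    next
      case False
      then obtain v where v: "v \<in> V" "E v (\<pi> v)" by auto
      define u where "u = \<pi> v"
      have u: "u \<in> V" "u \<noteq> v" "\<pi> u = v" using Suc.prems v by (auto simp: invol_def u_def)
      define C where "C = V - {v,u} - {x\<in>V. E v x} - \<pi> ` {x\<in>V. E u x}"
      have "card V \<le> card C + card ({v,u} \<union> {x\<in>V. E v x} \<union> \<pi> ` {x\<in>V. E u x})"
      proof -
        have "V \<subseteq> C \<union> ({v,u} \<union> {x\<in>V. E v x} \<union> \<pi> ` {x\<in>V. E u x})" by (auto simp: C_def)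
        hence "card V \<le> card (C \<union> ({v,u} \<union> {x\<in>V. E v x} \<union> \<pi> ` {x\<in>V. E u x}))"
          using finV by (intro card_mono) (auto simp: C_def)
        also have "\<dots> \<le> card C + card ({v,u} \<union> {x\<in>V. E v x} \<union> \<pi> ` {x\<in>V. E u x})" by (rule card_Un_le)
        finally show ?thesis .
      qed
      moreover have "card ({v,u} \<union> {x\<in>V. E v x} \<union> \<pi> ` {x\<in>V. E u x}) \<le> 2 + d + d"
      proof -
        have "card ({v,u} \<union> {x\<in>V. E v x} \<union> \<pi> ` {x\<in>V. E u x}) \<le> card ({v,u} \<union> {x\<in>V. E v x}) + card (\<pi> ` {x\<in>V. E u x})"
          by (rule card_Un_le)
        also have "\<dots> \<le> card {v,u} + card {x\<in>V. E v x} + card {x\<in>V. E u x}"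
          using card_Un_le[of "{v,u}" "{x\<in>V. E v x}"] card_image_le[of "{x\<in>V. E u x}" \<pi>] finV by simp
        also have "\<dots> \<le> 2 + d + d"
        proof -
          have "card {v,u} = 2" using u(2) by auto
          thus ?thesis using reg[OF v(1)] reg[OF u(1)] by linarith
        qed
        finally show ?thesis .
      qed
      ultimately have "card C > 0" using n by linarith
      then obtain w where w: "w \<in> C" by (metis card_gt_0_iff ex_in_conv)
      define z where "z = \<pi> w"
      have wV: "w \<in> V" "w \<noteq> v" "w \<noteq> u" "\<not> E v w" using w by (auto simp: C_def)
      have z: "z \<in> V" "z \<noteq> w" "\<pi> z = w" using Suc.prems wV by (auto simp: invol_def z_def)
      have zvu: "z \<noteq> v" "z \<noteq> u" using z u wV unfolding u_def by metis+
      have nEuz: "\<not> E u z"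
      proof
        assume "E u z"
        hence "z \<in> {x\<in>V. E u x}" using z by auto
        hence "w \<in> \<pi> ` {x\<in>V. E u x}" using z by (metis image_eqI)
        thus False using w by (auto simp: C_def)
      qed
      have sym: "\<And>a b. E a b \<Longrightarrow> E b a" using sg by (simp add: simple_graph_def)
      define \<pi>' where "\<pi>' = \<pi>(v := w, w := v, u := z, z := u)"
      have dist: "v \<noteq> w" "v \<noteq> u" "v \<noteq> z" "w \<noteq> u" "w \<noteq> z" "u \<noteq> z"
        using wV zvu z u by auto
      have vals: "\<pi>' v = w" "\<pi>' w = v" "\<pi>' u = z" "\<pi>' z = u"
        using dist unfolding \<pi>'_def by (simp_all add: fun_upd_def)
      have pi': "\<pi>' x = \<pi> x" if "x \<notin> {v,w,u,z}" for x using that by (auto simp: \<pi>'_def)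
      have inv': "invol V \<pi>'"
        unfolding invol_def
      proof
        fix x assume x: "x \<in> V"
        show "\<pi>' x \<in> V \<and> \<pi>' x \<noteq> x \<and> \<pi>' (\<pi>' x) = x"
        proof (cases "x \<in> {v,w,u,z}")
          case True
          hence "x = v \<or> x = w \<or> x = u \<or> x = z" by simp
          thus ?thesis using vals dist v(1) u(1) wV(1) z(1) by (elim disjE) simp_all
        next
          case False
          have px: "\<pi> x \<in> V" "\<pi> x \<noteq> x" "\<pi> (\<pi> x) = x" using Suc.prems x by (auto simp: invol_def)
          have pw: "\<pi> w = z" and pv: "\<pi> v = u" by (simp_all add: z_def u_def)
          have "\<pi> x \<noteq> v" using px(3) pv False by (metis insertCI)
          moreover have "\<pi> x \<noteq> u" using px(3) u(3) False by (metis insertCI)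
          moreover have "\<pi> x \<noteq> w" using px(3) pw False by (metis insertCI)
          moreover have "\<pi> x \<noteq> z" using px(3) z(3) False by (metis insertCI)
          ultimately have "\<pi> x \<notin> {v,w,u,z}" by blast
          thus ?thesis using pi' False px by auto
        qed
      qed
      have "{x\<in>V. E x (\<pi>' x)} \<subseteq> {x\<in>V. E x (\<pi> x)} - {v}"
      proof
        fix x assume x: "x \<in> {x\<in>V. E x (\<pi>' x)}"
        show "x \<in> {x\<in>V. E x (\<pi> x)} - {v}"
        proof (cases "x \<in> {v,w,u,z}")
          case True
          hence "x = v \<or> x = w \<or> x = u \<or> x = z" by simp
          thus ?thesis using x vals wV(4) nEuz sym by (elim disjE) auto
        next
          case False thus ?thesis using x pi' by auto
        qed
      qed
      hence "card {x\<in>V. E x (\<pi>' x)} \<le> card ({x\<in>V. E x (\<pi> x)} - {v})"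
        using finV by (intro card_mono) auto
      also have "\<dots> < card {x\<in>V. E x (\<pi> x)}" using v finV by (intro card_Diff1_less) auto
      finally have "card {x\<in>V. E x (\<pi>' x)} \<le> k" using Suc.prems by linarith
      thus ?thesis using Suc.IH inv' by blast
    qed
  }
qed



lemma bool_xor_eq: "((a = b) \<noteq> s) = (a = (b \<noteq> s))" for a b s :: bool by auto

lemma main_construct:
  fixes V :: "nat set" and E and d t :: nat and y :: real
  assumes sg: "simple_graph V E" and reg: "regular V E d" and ev: "even (card V)"
    and nV: "2*d + 3 \<le> card V" and t1: "1 \<le> t" and td: "t \<le> d"
    and y1: "y \<le> (real d powr (2/3))^2 / real d" and y2: "y \<le> (real t powr (2/3))^2 / real t"
    and pD: "2 * exp (-2*y) * (real (2*d*(6*d+2)) + 2)^2 \<le> 1"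
  shows "\<exists>A B :: nat \<Rightarrow> nat set.
          (\<forall>i \<in> {1..t}. balanced_bipartition V (A i) (B i)) \<and>
          (\<forall>i \<in> {1..t}.
             real d / 2 - real d powr (2 / 3) \<le> real (min_degree V (cut_edges E (A i) (B i))) \<and>
             min_degree V (cut_edges E (A i) (B i)) \<le> max_degree V (cut_edges E (A i) (B i)) \<and>
             real (max_degree V (cut_edges E (A i) (B i))) \<le> real d / 2 + real d powr (2 / 3)) \<and>
          (\<forall>u v. E u v \<longrightarrow>
             real t / 2 - real t powr (2 / 3) \<le> real (card {i \<in> {1..t}. cut_edges E (A i) (B i) u v}) \<and>
             real (card {i \<in> {1..t}. cut_edges E (A i) (B i) u v}) \<le> real t / 2 + real t powr (2 / 3))"
proof -
  have finV: "finite V" using sg by (simp add: simple_graph_def)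
  have Ein: "E u v \<Longrightarrow> u \<in> V \<and> v \<in> V" for u v using sg by (simp add: simple_graph_def)
  have Esym: "E u v \<Longrightarrow> E v u" for u v using sg by (simp add: simple_graph_def)
  have Eirr: "\<not> E v v" for v using sg by (simp add: simple_graph_def)
  define Nb where "Nb v = {u\<in>V. E v u}" for v
  have cNb: "v \<in> V \<Longrightarrow> card (Nb v) = d" for v using reg by (simp add: regular_def Defs.degree_def Nb_def)
  have finNb: "finite (Nb v)" for v using finV by (simp add: Nb_def)
  have d1: "1 \<le> d" using t1 td by simp
  obtain \<pi>0 where "invol V \<pi>0" using invol_exists[OF finV ev] by blast
  then obtain \<pi> where pinv: "invol V \<pi>" and pgood: "\<forall>v\<in>V. \<not> E v (\<pi> v)"
    using invol_good_aux[OF sg _ nV, of \<pi>0 "card {v\<in>V. E v (\<pi>0 v)}"] cNb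
    unfolding Nb_def by auto
  have pV: "v \<in> V \<Longrightarrow> \<pi> v \<in> V" and pne: "v \<in> V \<Longrightarrow> \<pi> v \<noteq> v" and ppi: "v \<in> V \<Longrightarrow> \<pi> (\<pi> v) = v" for v
    using pinv by (auto simp: invol_def)
  define R where "R = {v\<in>V. v < \<pi> v}"
  define \<rho> where "\<rho> v = min v (\<pi> v)" for v
  define \<sigma> where "\<sigma> v = (v < \<pi> v)" for v
  define side where "side f i v = (f (\<rho> v, i) = \<sigma> v)" for f :: "nat \<times> nat \<Rightarrow> bool" and i v
  have rhoR: "\<rho> v \<in> R" if v: "v \<in> V" for v
  proof (cases "v < \<pi> v")
    case True thus ?thesis using v by (simp add: \<rho>_def R_def)
  next
    case False
    hence "\<pi> v < v" using pne[OF v] by simp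
    hence "\<pi> v < \<pi> (\<pi> v)" using ppi[OF v] by simp
    thus ?thesis using pV[OF v] pne[OF v] False by (simp add: \<rho>_def R_def min_def)
  qed
  have rhopi: "v \<in> V \<Longrightarrow> \<rho> (\<pi> v) = \<rho> v" for v using ppi by (simp add: \<rho>_def min.commute)
  have sigpi: "\<sigma> (\<pi> v) = (\<not> \<sigma> v)" if v: "v \<in> V" for v
    using ppi[OF v] pne[OF v] unfolding \<sigma>_def by (cases "v < \<pi> v") auto
  have sidepi: "v \<in> V \<Longrightarrow> side f i (\<pi> v) = (\<not> side f i v)" for f i v
    using rhopi sigpi by (auto simp: side_def)
  have rhoeq: "u \<in> V \<Longrightarrow> w \<in> V \<Longrightarrow> \<rho> u = \<rho> w \<Longrightarrow> u = w \<or> u = \<pi> w" for u w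
    using ppi by (auto simp: \<rho>_def min_def split: if_splits) (metis ppi)+
  have rhoNb: "u \<in> Nb v \<Longrightarrow> \<rho> u \<noteq> \<rho> v" for u v
  proof
    assume u: "u \<in> Nb v" and eq: "\<rho> u = \<rho> v"
    have uv: "u \<in> V" "v \<in> V" "E v u" using u Ein by (auto simp: Nb_def)
    from rhoeq[OF uv(1,2) eq] show False using uv Eirr pgood by auto
  qed
  define I where "I = R \<times> {1..t}"
  have finI: "finite I" using finV by (simp add: I_def R_def)
  define EV where "EV = {(u,v). E u v}"
  have finEV: "finite EV"
  proof -
    have "EV \<subseteq> V \<times> V" using Ein by (auto simp: EV_def)
    thus ?thesis using finV finite_subset by blast
  qed
  define X :: "((nat \<times> nat) + (nat \<times> nat)) set" where "X = Inl ` (V \<times> {1..t}) \<union> Inr ` EV"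
  have finX: "finite X" using finV finEV by (simp add: X_def)
  define cntV where "cntV f i v = card {u\<in>Nb v. side f i u \<noteq> side f i v}" for f i v
  define cntE where "cntE f u v = card {i\<in>{1..t}. side f i u \<noteq> side f i v}" for f u v
  define Aev :: "((nat \<times> nat) + (nat \<times> nat)) \<Rightarrow> (nat \<times> nat \<Rightarrow> bool) set" where
    "Aev x = (case x of Inl (v,i) \<Rightarrow> {f. real d powr (2/3) < \<bar>real (cntV f i v) - real d/2\<bar>}
                    | Inr (u,v) \<Rightarrow> {f. real t powr (2/3) < \<bar>real (cntE f u v) - real t/2\<bar>})" for x
  define J :: "((nat \<times> nat) + (nat \<times> nat)) \<Rightarrow> (nat \<times> nat) set" where
    "J x = (case x of Inl (v,i) \<Rightarrow> (\<lambda>w. (\<rho> w, i)) ` insert v (Nb v)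
                    | Inr (u,v) \<Rightarrow> {\<rho> u, \<rho> v} \<times> {1..t})" for x
  define \<Gamma> where "\<Gamma> x = {z\<in>X. J x \<inter> J z \<noteq> {}}" for x
  define D where "D = 2*d*(6*d+2)"
  define p where "p = 2 * exp (-2*y)"
  have det: "detd I (J x) (Aev x)" for x
  proof (cases x)
    case (Inl a)
    obtain v i where x: "x = Inl (v,i)" using Inl by (cases a) auto
    show ?thesis unfolding detd_def
    proof (intro ballI impI)
      fix g h :: "nat \<times> nat \<Rightarrow> bool" assume agree: "\<forall>k\<in>J x. g k = h k"
      have sd: "side g i w = side h i w" if "w \<in> insert v (Nb v)" for w
        using agree that by (auto simp: J_def x side_def)
      have "cntV g i v = cntV h i v" unfolding cntV_def
        by (rule arg_cong[where f=card], rule Collect_cong) (use sd in auto)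
      thus "g \<in> Aev x \<longleftrightarrow> h \<in> Aev x" by (simp add: Aev_def x)
    qed
  next
    case (Inr a)
    obtain u v where x: "x = Inr (u,v)" using Inr by (cases a) auto
    show ?thesis unfolding detd_def
    proof (intro ballI impI)
      fix g h :: "nat \<times> nat \<Rightarrow> bool" assume agree: "\<forall>k\<in>J x. g k = h k"
      have sd: "side g i w = side h i w" if "w \<in> {u,v}" "i \<in> {1..t}" for w i
        using agree that by (auto simp: J_def x side_def)
      have "cntE g u v = cntE h u v" unfolding cntE_def
        by (rule arg_cong[where f=card], rule Collect_cong) (use sd in auto)
      thus "g \<in> Aev x \<longleftrightarrow> h \<in> Aev x" by (simp add: Aev_def x)
    qed
  qed
  have sep: "J x \<inter> J z = {}" if "x \<in> X" "z \<in> X" "z \<notin> \<Gamma> x" "z \<noteq> x" for x z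
    using that by (auto simp: \<Gamma>_def)
  have Rr: "{w\<in>V. \<rho> w = r} \<subseteq> {r, \<pi> r}" for r
  proof
    fix w assume w: "w \<in> {w\<in>V. \<rho> w = r}"
    hence "w = r \<or> \<pi> w = r" by (auto simp: \<rho>_def min_def split: if_splits)
    moreover have "\<pi> w = r \<Longrightarrow> w = \<pi> r" using w ppi by auto
    ultimately show "w \<in> {r, \<pi> r}" by blast
  qed
  have cRr: "card {w\<in>V. \<rho> w = r} \<le> 2" for r
  proof -
    have "card {w\<in>V. \<rho> w = r} \<le> card {r, \<pi> r}" by (rule card_mono[OF _ Rr]) simp
    also have "\<dots> \<le> 2" by (simp add: card_insert_if)
    finally show ?thesis .
  qed
  have sumNb: "(\<Sum>w\<in>{w\<in>V. \<rho> w = r}. card (Nb w)) \<le> 2*d" for r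
  proof -
    have "(\<Sum>w\<in>{w\<in>V. \<rho> w = r}. card (Nb w)) = card {w\<in>V. \<rho> w = r} * d"
      using cNb by simp
    also have "\<dots> \<le> 2 * d" using cRr[of r] by simp
    finally show ?thesis .
  qed
  have cntk: "card {z\<in>X. k \<in> J z} \<le> 6*d+2" for k
  proof -
    obtain r i where k: "k = (r,i)" by (cases k)
    define Q1 where "Q1 = {w\<in>V. \<rho> w = r}"
    define P where "P = Q1 \<union> (\<Union>w\<in>Q1. Nb w)"
    define Q where "Q = (\<Union>w\<in>Q1. {w} \<times> Nb w) \<union> (\<Union>w\<in>Q1. Nb w \<times> {w})"
    have finQ1: "finite Q1" using finV by (simp add: Q1_def)
    have sub: "{z\<in>X. k \<in> J z} \<subseteq> Inl ` (P \<times> {i}) \<union> Inr ` Q"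
    proof
      fix z assume z: "z \<in> {z\<in>X. k \<in> J z}"
      show "z \<in> Inl ` (P \<times> {i}) \<union> Inr ` Q"
      proof (cases z)
        case (Inl a)
        obtain v i' where zz: "z = Inl (v,i')" using Inl by (cases a) auto
        have vV: "v \<in> V" using z zz by (auto simp: X_def)
        from z obtain w where w: "w \<in> insert v (Nb v)" "\<rho> w = r" "i' = i"
          by (auto simp: zz J_def k)
        have "v \<in> P"
        proof (cases "w = v")
          case True thus ?thesis using w vV by (auto simp: P_def Q1_def)
        next
          case False
          hence "w \<in> V" "E v w" using w by (auto simp: Nb_def)
          hence "w \<in> Q1" "v \<in> Nb w" using w vV Esym by (auto simp: Q1_def Nb_def)
          thus ?thesis by (auto simp: P_def)
        qed
        thus ?thesis using zz w by auto
      next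
        case (Inr a)
        obtain u v where zz: "z = Inr (u,v)" using Inr by (cases a) auto
        have uv: "E u v" using z zz by (auto simp: X_def EV_def)
        have uvV: "u \<in> V" "v \<in> V" using Ein[OF uv] by auto
        have "\<rho> u = r \<or> \<rho> v = r" using z by (auto simp: zz J_def k)
        hence "(u,v) \<in> Q"
        proof
          assume "\<rho> u = r" thus ?thesis using uvV uv by (auto simp: Q_def Q1_def Nb_def)
        next
          assume "\<rho> v = r" thus ?thesis using uvV uv Esym by (auto simp: Q_def Q1_def Nb_def)
        qed
        thus ?thesis using zz by auto
      qed
    qed
    have cP: "card P \<le> 2 + 2*d"
    proof -
      have "card P \<le> card Q1 + card (\<Union>w\<in>Q1. Nb w)" unfolding P_def by (rule card_Un_le)
      also have "card (\<Union>w\<in>Q1. Nb w) \<le> (\<Sum>w\<in>Q1. card (Nb w))" by (rule card_UN_le[OF finQ1])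
      finally show ?thesis using cRr[of r] sumNb[of r] unfolding Q1_def by linarith
    qed
    have cQ: "card Q \<le> 4*d"
    proof -
      have "card Q \<le> card (\<Union>w\<in>Q1. {w} \<times> Nb w) + card (\<Union>w\<in>Q1. Nb w \<times> {w})"
        unfolding Q_def by (rule card_Un_le)
      also have "card (\<Union>w\<in>Q1. {w} \<times> Nb w) \<le> (\<Sum>w\<in>Q1. card ({w} \<times> Nb w))" by (rule card_UN_le[OF finQ1])
      also have "card (\<Union>w\<in>Q1. Nb w \<times> {w}) \<le> (\<Sum>w\<in>Q1. card (Nb w \<times> {w}))" by (rule card_UN_le[OF finQ1])
      finally show ?thesis using sumNb[of r] unfolding Q1_def by (simp add: card_cartesian_product)
    qed
    have finPQ: "finite (P \<times> {i})" "finite Q"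
      using finQ1 finNb by (auto simp: P_def Q_def)
    have "card {z\<in>X. k \<in> J z} \<le> card (Inl ` (P \<times> {i}) \<union> Inr ` Q)"
      by (rule card_mono[OF _ sub]) (use finPQ in simp)
    also have "\<dots> \<le> card (Inl ` (P \<times> {i}) :: ((nat\<times>nat)+(nat\<times>nat)) set) + card (Inr ` Q :: ((nat\<times>nat)+(nat\<times>nat)) set)"
      by (rule card_Un_le)
    also have "\<dots> = card P + card Q" by (simp add: card_image card_cartesian_product)
    finally show ?thesis using cP cQ by linarith
  qed
  have cJ: "card (J x) \<le> 2*d" if "x \<in> X" for x
  proof (cases x)
    case (Inl a)
    obtain v i where x: "x = Inl (v,i)" using Inl by (cases a) auto
    have vV: "v \<in> V" using that x by (auto simp: X_def)
    have "card (J x) \<le> card (insert v (Nb v))" unfolding J_def x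
      by (simp only: sum.case prod.case) (rule card_image_le, simp add: finNb)
    also have "\<dots> \<le> d + 1" using cNb[OF vV] finNb card_insert_le_m1 by (simp add: card_insert_if)
    finally show ?thesis using d1 by linarith
  next
    case (Inr a)
    obtain u v where x: "x = Inr (u,v)" using Inr by (cases a) auto
    have "card (J x) = card {\<rho> u, \<rho> v} * t" unfolding J_def x by (simp add: card_cartesian_product)
    also have "\<dots> \<le> 2 * t" by (intro mult_right_mono) (auto simp: card_insert_if)
    finally show ?thesis using td by linarith
  qed
  have finJ: "finite (J x)" for x
    by (cases x) (auto simp: J_def finNb split: prod.splits)
  have Gfin: "finite (\<Gamma> x) \<and> card (\<Gamma> x) \<le> D" if x: "x \<in> X" for x
  proof
    show "finite (\<Gamma> x)" using finX by (simp add: \<Gamma>_def)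
    have "\<Gamma> x \<subseteq> (\<Union>k\<in>J x. {z\<in>X. k \<in> J z})" by (auto simp: \<Gamma>_def)
    hence "card (\<Gamma> x) \<le> card (\<Union>k\<in>J x. {z\<in>X. k \<in> J z})"
      by (intro card_mono) (use finJ finX in auto)
    also have "\<dots> \<le> (\<Sum>k\<in>J x. card {z\<in>X. k \<in> J z})" by (rule card_UN_le[OF finJ])
    also have "\<dots> \<le> (\<Sum>k\<in>J x. 6*d+2)" by (intro sum_mono cntk)
    also have "\<dots> = card (J x) * (6*d+2)" by simp
    also have "\<dots> \<le> 2*d*(6*d+2)" using cJ[OF x] by (intro mult_right_mono) auto
    finally show "card (\<Gamma> x) \<le> D" by (simp add: D_def)
  qed
  have finOm: "finite (Om I)" by (rule Om_finite[OF finI])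
  have p0: "0 \<le> p" by (simp add: p_def)
  have prob: "real (card (Aev x \<inter> Om I)) \<le> p * real (card (Om I))" if xX: "x \<in> X" for x
  proof (cases x)
    case (Inl a)
    obtain v i where x: "x = Inl (v,i)" using Inl by (cases a) auto
    have vV: "v \<in> V" and iT: "i \<in> {1..t}" using xX x by (auto simp: X_def)
    define N1 where "N1 = {u\<in>Nb v. \<pi> u \<notin> Nb v}"
    define N2 where "N2 = {u\<in>Nb v. \<pi> u \<in> Nb v}"
    have finN: "finite N1" "finite N2" using finNb by (auto simp: N1_def N2_def)
    have cN: "card N1 + card N2 = d"
    proof -
      have "Nb v = N1 \<union> N2" "N1 \<inter> N2 = {}" by (auto simp: N1_def N2_def)
      thus ?thesis using cNb[OF vV] card_Un_disjoint[OF finN] by simp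
    qed
    define \<phi> where "\<phi> u = (\<rho> u, i)" for u
    define cc where "cc g u = (\<sigma> u \<noteq> side g i v)" for g :: "nat \<times> nat \<Rightarrow> bool" and u
    have half: "2 * card {u\<in>N2. side g i u \<noteq> side g i v} = card N2" for g
    proof -
      define X2 where "X2 = {u\<in>N2. side g i u \<noteq> side g i v}"
      have N2V: "u \<in> N2 \<Longrightarrow> u \<in> V" for u by (auto simp: N2_def Nb_def)
      have inj: "inj_on \<pi> X2" by (rule inj_onI) (metis ppi N2V X2_def mem_Collect_eq)
      have im: "\<pi> ` X2 = N2 - X2"
      proof
        show "\<pi> ` X2 \<subseteq> N2 - X2"
        proof
          fix w assume "w \<in> \<pi> ` X2"
          then obtain u where u: "u \<in> X2" "w = \<pi> u" by auto
          have uV: "u \<in> V" using u N2V by (auto simp: X2_def)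
          have "\<pi> u \<in> N2" using u uV ppi[OF uV] by (auto simp: X2_def N2_def)
          moreover have "side g i (\<pi> u) = side g i v" using u sidepi[OF uV] by (auto simp: X2_def)
          ultimately show "w \<in> N2 - X2" using u by (auto simp: X2_def)
        qed
      next
        show "N2 - X2 \<subseteq> \<pi> ` X2"
        proof
          fix u assume u: "u \<in> N2 - X2"
          have uV: "u \<in> V" using u N2V by auto
          have "\<pi> u \<in> N2" using u uV ppi[OF uV] by (auto simp: X2_def N2_def)
          moreover have "side g i (\<pi> u) \<noteq> side g i v" using u sidepi[OF uV] by (auto simp: X2_def)
          ultimately have "\<pi> u \<in> X2" by (auto simp: X2_def)
          thus "u \<in> \<pi> ` X2" using ppi[OF uV] by (metis image_eqI)
        qed
      qed
      have "card X2 = card (N2 - X2)" using card_image[OF inj] im by simp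
      also have "\<dots> = card N2 - card X2" using finN by (intro card_Diff_subset) (auto simp: X2_def intro: finite_subset)
      finally have "card X2 = card N2 - card X2" .
      moreover have "card X2 \<le> card N2" using finN by (intro card_mono) (auto simp: X2_def)
      ultimately show ?thesis unfolding X2_def by linarith
    qed
    have key: "real (cntV g i v) - real d / 2 = real (card {u\<in>N1. g (\<phi> u) = cc g u}) - real (card N1) / 2" for g
    proof -
      have "{u\<in>Nb v. side g i u \<noteq> side g i v} = {u\<in>N1. side g i u \<noteq> side g i v} \<union> {u\<in>N2. side g i u \<noteq> side g i v}"
        "{u\<in>N1. side g i u \<noteq> side g i v} \<inter> {u\<in>N2. side g i u \<noteq> side g i v} = {}"
        by (auto simp: N1_def N2_def)
      hence "cntV g i v = card {u\<in>N1. side g i u \<noteq> side g i v} + card {u\<in>N2. side g i u \<noteq> side g i v}"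
        unfolding cntV_def using finN by (simp add: card_Un_disjoint)
      moreover have "{u\<in>N1. side g i u \<noteq> side g i v} = {u\<in>N1. g (\<phi> u) = cc g u}"
        by (auto simp: side_def \<phi>_def cc_def)
      ultimately have "real (cntV g i v) = real (card {u\<in>N1. g (\<phi> u) = cc g u}) + real (card N2) / 2"
        using half[of g] by simp
      thus ?thesis using cN by (simp add: field_simps)
    qed
    have dpos: "0 < real d powr (2/3)" using d1 by simp
    have sub1: "Aev x \<inter> Om I \<subseteq> {g\<in>Om I. real d powr (2/3) \<le> \<bar>real (card {u\<in>N1. g (\<phi> u) = cc g u}) - real (card N1)/2\<bar>}"
      using key by (auto simp: Aev_def x)
    show ?thesis
    proof (cases "N1 = {}")
      case True
      hence "{g\<in>Om I. real d powr (2/3) \<le> \<bar>real (card {u\<in>N1. g (\<phi> u) = cc g u}) - real (card N1)/2\<bar>} = {}"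
        using dpos by simp
      hence "Aev x \<inter> Om I = {}" using sub1 by blast
      thus ?thesis using p0 by simp
    next
      case False
      have inj: "inj_on \<phi> N1"
      proof (rule inj_onI)
        fix u w assume uw: "u \<in> N1" "w \<in> N1" "\<phi> u = \<phi> w"
        have V2: "u \<in> V" "w \<in> V" using uw by (auto simp: N1_def Nb_def)
        from rhoeq[OF V2] uw have "u = w \<or> u = \<pi> w" by (simp add: \<phi>_def)
        thus "u = w" using uw by (auto simp: N1_def)
      qed
      have sub: "\<phi> ` N1 \<subseteq> I" using rhoR iT by (auto simp: \<phi>_def I_def N1_def Nb_def)
      have inv: "cc (g(k:=b)) = cc g" if "k \<in> \<phi> ` N1" for g k b
      proof -
        have "k \<noteq> (\<rho> v, i)" using that rhoNb by (auto simp: \<phi>_def N1_def)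
        thus ?thesis by (simp add: cc_def side_def fun_eq_iff)
      qed
      have ch: "real (card {g\<in>Om I. real d powr (2/3) \<le> \<bar>real (card {u\<in>N1. g (\<phi> u) = cc g u}) - real (card N1)/2\<bar>})
          \<le> 2 * real (card (Om I)) * exp (-2*(real d powr (2/3))^2 / real (card N1))"
        by (rule chernoff[OF finI finN(1) inj sub inv dpos False])
      have n1: "0 < real (card N1)" "real (card N1) \<le> real d" using finN False cN by (auto simp: card_gt_0_iff)
      have "y \<le> (real d powr (2/3))^2 / real (card N1)"
        using y1 n1 by (smt (verit) divide_left_mono mult_pos_pos zero_le_power2)
      hence "exp (-2*(real d powr (2/3))^2 / real (card N1)) \<le> exp (-2*y)" by simp
      hence "2 * real (card (Om I)) * exp (-2*(real d powr (2/3))^2 / real (card N1)) \<le> 2 * real (card (Om I)) * exp (-2*y)"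
        by (rule mult_left_mono) simp
      hence "2 * real (card (Om I)) * exp (-2*(real d powr (2/3))^2 / real (card N1)) \<le> p * real (card (Om I))"
        by (simp add: p_def mult_ac)
      moreover have "card (Aev x \<inter> Om I) \<le> card {g\<in>Om I. real d powr (2/3) \<le> \<bar>real (card {u\<in>N1. g (\<phi> u) = cc g u}) - real (card N1)/2\<bar>}"
        by (rule card_mono[OF _ sub1]) (simp add: finOm)
      ultimately show ?thesis using ch by linarith
    qed
  next
    case (Inr a)
    obtain u v where x: "x = Inr (u,v)" using Inr by (cases a) auto
    have uv: "E u v" using xX x by (auto simp: X_def EV_def)
    have uvV: "u \<in> V" "v \<in> V" using Ein[OF uv] by auto
    have ruv: "\<rho> u \<noteq> \<rho> v" using rhoNb[of v u] uv uvV by (auto simp: Nb_def)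
    define \<phi> where "\<phi> j = (\<rho> u, j)" for j :: nat
    define cc where "cc g j = (\<sigma> u \<noteq> side g j v)" for g :: "nat \<times> nat \<Rightarrow> bool" and j
    have eqc: "cntE g u v = card {j\<in>{1..t}. g (\<phi> j) = cc g j}" for g
      unfolding cntE_def by (rule arg_cong[where f=card]) (auto simp: side_def \<phi>_def cc_def)
    have tpos: "0 < real t powr (2/3)" using t1 by simp
    have sub1: "Aev x \<inter> Om I \<subseteq> {g\<in>Om I. real t powr (2/3) \<le> \<bar>real (card {j\<in>{1..t}. g (\<phi> j) = cc g j}) - real (card {1..t})/2\<bar>}"
      using eqc by (auto simp: Aev_def x)
    have inj: "inj_on \<phi> {1..t}" by (rule inj_onI) (simp add: \<phi>_def)
    have sub: "\<phi> ` {1..t} \<subseteq> I" using rhoR uvV by (auto simp: \<phi>_def I_def)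
    have inv: "cc (g(k:=b)) = cc g" if "k \<in> \<phi> ` {1..t}" for g k b
    proof -
      have kk: "\<forall>j. k \<noteq> (\<rho> v, j)" using that ruv by (auto simp: \<phi>_def)
      show ?thesis unfolding cc_def side_def fun_eq_iff using kk by auto
    qed
    have ne: "{1..t} \<noteq> {}" using t1 by simp
    have ch: "real (card {g\<in>Om I. real t powr (2/3) \<le> \<bar>real (card {j\<in>{1..t}. g (\<phi> j) = cc g j}) - real (card {1..t})/2\<bar>})
          \<le> 2 * real (card (Om I)) * exp (-2*(real t powr (2/3))^2 / real (card {1..t::nat}))"
      by (rule chernoff[OF finI _ inj sub inv tpos ne]) simp
    have "exp (-2*(real t powr (2/3))^2 / real (card {1..t::nat})) \<le> exp (-2*y)"
      using y2 by simp
    hence "2 * real (card (Om I)) * exp (-2*(real t powr (2/3))^2 / real (card {1..t::nat})) \<le> 2 * real (card (Om I)) * exp (-2*y)"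
      by (rule mult_left_mono) simp
    hence "2 * real (card (Om I)) * exp (-2*(real t powr (2/3))^2 / real (card {1..t::nat})) \<le> p * real (card (Om I))"
      by (simp add: p_def mult_ac)
    moreover have "card (Aev x \<inter> Om I) \<le> card {g\<in>Om I. real t powr (2/3) \<le> \<bar>real (card {j\<in>{1..t}. g (\<phi> j) = cc g j}) - real (card {1..t})/2\<bar>}"
      by (rule card_mono[OF _ sub1]) (simp add: finOm)
    ultimately show ?thesis using ch by linarith
  qed
  have pD': "p * (real D + 2)^2 \<le> 1" using pD by (simp add: p_def D_def)
  have "\<exists>f\<in>Om I. \<forall>x\<in>X. f \<notin> Aev x"
    by (rule lll[where J=J and Aev=Aev and \<Gamma>=\<Gamma> and D=D and p=p, OF finI finX])
       (use det sep Gfin prob pD' in blast)+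
  then obtain f where fOm: "f \<in> Om I" and fgood: "\<forall>x\<in>X. f \<notin> Aev x" by blast
  define A where "A i = {v\<in>V. side f i v}" for i
  define B where "B i = {v\<in>V. \<not> side f i v}" for i
  have bal: "balanced_bipartition V (A i) (B i)" for i
  proof -
    have U: "A i \<union> B i = V" "A i \<inter> B i = {}" by (auto simp: A_def B_def)
    have inj: "inj_on \<pi> (A i)" by (rule inj_onI) (metis ppi A_def mem_Collect_eq)
    have im: "\<pi> ` A i = B i"
    proof
      show "\<pi> ` A i \<subseteq> B i" using pV sidepi by (auto simp: A_def B_def)
    next
      show "B i \<subseteq> \<pi> ` A i"
      proof
        fix v assume v: "v \<in> B i"
        hence "\<pi> v \<in> A i" "\<pi> (\<pi> v) = v" using pV sidepi ppi by (auto simp: A_def B_def)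
        thus "v \<in> \<pi> ` A i" by (metis image_eqI)
      qed
    qed
    have "card (B i) = card (A i)" using card_image[OF inj] im by simp
    moreover have "card (A i) + card (B i) = card V"
      using U finV card_Un_disjoint[of "A i" "B i"] by (metis finite_Un)
    ultimately show ?thesis using U by (simp add: balanced_bipartition_def)
  qed
  have degeq: "Defs.degree V (cut_edges E (A i) (B i)) v = cntV f i v" if v: "v \<in> V" for i v
  proof -
    have "{u\<in>V. cut_edges E (A i) (B i) v u} = {u\<in>Nb v. side f i u \<noteq> side f i v}"
      using v by (auto simp: cut_edges_def A_def B_def Nb_def)
    thus ?thesis by (simp add: Defs.degree_def cntV_def)
  qed
  have R1v: "\<bar>real (cntV f i v) - real d/2\<bar> \<le> real d powr (2/3)" if "v \<in> V" "i \<in> {1..t}" for v i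
  proof -
    have "Inl (v,i) \<in> X" using that by (simp add: X_def)
    hence "f \<notin> Aev (Inl (v,i))" using fgood by blast
    thus ?thesis by (simp add: Aev_def)
  qed
  have Vne: "V \<noteq> {}" using nV by auto
  have R1: "real d / 2 - real d powr (2 / 3) \<le> real (min_degree V (cut_edges E (A i) (B i))) \<and>
             min_degree V (cut_edges E (A i) (B i)) \<le> max_degree V (cut_edges E (A i) (B i)) \<and>
             real (max_degree V (cut_edges E (A i) (B i))) \<le> real d / 2 + real d powr (2 / 3)"
    if i: "i \<in> {1..t}" for i
  proof -
    define S where "S = Defs.degree V (cut_edges E (A i) (B i)) ` V"
    have Sf: "finite S" "S \<noteq> {}" using finV Vne by (auto simp: S_def)
    obtain v0 where v0: "v0 \<in> V" "Min S = Defs.degree V (cut_edges E (A i) (B i)) v0"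
      using Min_in[OF Sf] by (auto simp: S_def)
    obtain v1 where v1: "v1 \<in> V" "Max S = Defs.degree V (cut_edges E (A i) (B i)) v1"
      using Max_in[OF Sf] by (auto simp: S_def)
    have "Min S \<le> Max S" using Min_le[OF Sf(1) Max_in[OF Sf]] .
    moreover have "real d / 2 - real d powr (2 / 3) \<le> real (Min S)"
      using R1v[OF v0(1) i] v0 degeq[OF v0(1)] by simp
    moreover have "real (Max S) \<le> real d / 2 + real d powr (2 / 3)"
      using R1v[OF v1(1) i] v1 degeq[OF v1(1)] by simp
    ultimately show ?thesis by (simp add: min_degree_def max_degree_def S_def)
  qed
  have R2: "real t / 2 - real t powr (2 / 3) \<le> real (card {i \<in> {1..t}. cut_edges E (A i) (B i) u v}) \<and>
             real (card {i \<in> {1..t}. cut_edges E (A i) (B i) u v}) \<le> real t / 2 + real t powr (2 / 3)"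
    if uv: "E u v" for u v
  proof -
    have uvV: "u \<in> V" "v \<in> V" using Ein[OF uv] by auto
    have "{i \<in> {1..t}. cut_edges E (A i) (B i) u v} = {i\<in>{1..t}. side f i u \<noteq> side f i v}"
      using uvV uv by (auto simp: cut_edges_def A_def B_def)
    hence c: "card {i \<in> {1..t}. cut_edges E (A i) (B i) u v} = cntE f u v" by (simp add: cntE_def)
    have "Inr (u,v) \<in> X" using uv by (simp add: X_def EV_def)
    hence "f \<notin> Aev (Inr (u,v))" using fgood by blast
    hence "\<bar>real (cntE f u v) - real t/2\<bar> \<le> real t powr (2/3)" by (simp add: Aev_def)
    thus ?thesis unfolding c by arith
  qed
  show ?thesis using bal R1 R2 by blast
qed


lemma pw: fixes x :: real assumes "x > 0" shows "(x powr (2/3))^2 / x = x powr (1/3)"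
proof -
  have "(x powr (2/3))^2 = x powr (4/3)" using assms by (simp add: power2_eq_square powr_add[symmetric]) 
  moreover have "x powr (4/3 - 1) = x powr (4/3) / x powr 1" by (rule powr_diff)
  moreover have "x powr 1 = x" using assms by simp
  moreover have "(4/3 - 1 :: real) = 1/3" by simp
  ultimately show ?thesis by simp
qed
lemma ev_asym: fixes b::real assumes "b>0" shows "eventually (\<lambda>x. 2*exp(-2*(x powr b))*(2*x*(6*x+2)+2)^2 \<le> 1) at_top"
  using assms by real_asymp

theorem lemma3p1:
  fixes a :: real
  assumes "0 < a" and "a < 1"
  shows "\<exists>d0::nat. \<forall>d::nat. d \<ge> d0 \<longrightarrow> (\<exists>N::nat. \<forall>n::nat. n \<ge> N \<longrightarrow> even n \<longrightarrow>
    (\<forall>V E. simple_graph V E \<and> card V = n \<and> regular V E d \<longrightarrow>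
      (\<forall>t::nat. real d powr (a / 100) \<le> real t \<and> real t \<le> real d powr (1 / 10) \<longrightarrow>
        (\<exists>A B :: nat \<Rightarrow> nat set.
          (\<forall>i \<in> {1..t}. balanced_bipartition V (A i) (B i)) \<and>
          (\<forall>i \<in> {1..t}.
             real d / 2 - real d powr (2 / 3) \<le> real (min_degree V (cut_edges E (A i) (B i))) \<and>
             min_degree V (cut_edges E (A i) (B i)) \<le> max_degree V (cut_edges E (A i) (B i)) \<and>
             real (max_degree V (cut_edges E (A i) (B i))) \<le> real d / 2 + real d powr (2 / 3)) \<and>
          (\<forall>u v. E u v \<longrightarrow>
             real t / 2 - real t powr (2 / 3) \<le> real (card {i \<in> {1..t}. cut_edges E (A i) (B i) u v}) \<and>
             real (card {i \<in> {1..t}. cut_edges E (A i) (B i) u v}) \<le> real t / 2 + real t powr (2 / 3))))))"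
proof -
  define b where "b = a / 300"
  have b0: "0 < b" "b \<le> 1/3" using assms by (auto simp: b_def)
  have "eventually (\<lambda>x. 2*exp(-2*(x powr b))*(2*x*(6*x+2)+2)^2 \<le> 1) at_top"
    by (rule ev_asym[OF b0(1)])
  then obtain X0 where X0: "\<And>x. x \<ge> X0 \<Longrightarrow> 2*exp(-2*(x powr b))*(2*x*(6*x+2)+2)^2 \<le> 1"
    by (auto simp: eventually_at_top_linorder)
  define d0 where "d0 = max 2 (nat \<lceil>X0\<rceil>)"
  show ?thesis
  proof (rule exI[of _ d0], intro allI impI)
    fix d :: nat assume dd0: "d0 \<le> d"
    have d1: "1 \<le> real d" using dd0 by (simp add: d0_def)
    have dX: "X0 \<le> real d" using dd0 unfolding d0_def by linarith
    show "\<exists>N::nat. \<forall>n::nat. n \<ge> N \<longrightarrow> even n \<longrightarrow>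
    (\<forall>V E. simple_graph V E \<and> card V = n \<and> regular V E d \<longrightarrow>
      (\<forall>t::nat. real d powr (a / 100) \<le> real t \<and> real t \<le> real d powr (1 / 10) \<longrightarrow>
        (\<exists>A B :: nat \<Rightarrow> nat set.
          (\<forall>i \<in> {1..t}. balanced_bipartition V (A i) (B i)) \<and>
          (\<forall>i \<in> {1..t}.
             real d / 2 - real d powr (2 / 3) \<le> real (min_degree V (cut_edges E (A i) (B i))) \<and>
             min_degree V (cut_edges E (A i) (B i)) \<le> max_degree V (cut_edges E (A i) (B i)) \<and>
             real (max_degree V (cut_edges E (A i) (B i))) \<le> real d / 2 + real d powr (2 / 3)) \<and>
          (\<forall>u v. E u v \<longrightarrow>
             real t / 2 - real t powr (2 / 3) \<le> real (card {i \<in> {1..t}. cut_edges E (A i) (B i) u v}) \<and>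
             real (card {i \<in> {1..t}. cut_edges E (A i) (B i) u v}) \<le> real t / 2 + real t powr (2 / 3)))))"
    proof (rule exI[of _ "2*d+3"], intro allI impI)
      fix n V E t
      assume n: "2*d+3 \<le> n" and ev: "even n" and G: "simple_graph V E \<and> card V = n \<and> regular V E d"
        and T: "real d powr (a / 100) \<le> real t \<and> real t \<le> real d powr (1 / 10)"
      have sg: "simple_graph V E" and cV: "card V = n" and reg: "regular V E d" using G by auto
      have t1': "real d powr (a / 100) \<le> real t" and t2': "real t \<le> real d powr (1 / 10)" using T by auto
      have t1: "1 \<le> t"
      proof -
        have "1 \<le> real d powr (a/100)" using d1 assms by (intro ge_one_powr_ge_zero) auto
        thus ?thesis using t1' by linarith
      qed
      have td: "t \<le> d"
      proof -
        have "real d powr (1/10) \<le> real d powr 1" using d1 by (intro powr_mono) auto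
        thus ?thesis using t2' d1 by simp
      qed
      have y1: "real d powr b \<le> (real d powr (2/3))^2 / real d"
      proof -
        have "real d powr b \<le> real d powr (1/3)" using d1 b0 by (intro powr_mono) auto
        thus ?thesis using pw[of "real d"] d1 by simp
      qed
      have y2: "real d powr b \<le> (real t powr (2/3))^2 / real t"
      proof -
        have "real d powr b = (real d powr (a/100)) powr (1/3)" by (simp add: powr_powr b_def)
        also have "\<dots> \<le> real t powr (1/3)" using t1' by (intro powr_mono2) auto
        finally show ?thesis using pw[of "real t"] t1 by simp
      qed
      have e: "real (2*d*(6*d+2)) + 2 = 2*real d*(6*real d+2)+2" by (simp add: algebra_simps)
      have pD: "2 * exp (-2*(real d powr b)) * (real (2*d*(6*d+2)) + 2)^2 \<le> 1"
        unfolding e by (rule X0[OF dX])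
      show "\<exists>A B :: nat \<Rightarrow> nat set.
          (\<forall>i \<in> {1..t}. balanced_bipartition V (A i) (B i)) \<and>
          (\<forall>i \<in> {1..t}.
             real d / 2 - real d powr (2 / 3) \<le> real (min_degree V (cut_edges E (A i) (B i))) \<and>
             min_degree V (cut_edges E (A i) (B i)) \<le> max_degree V (cut_edges E (A i) (B i)) \<and>
             real (max_degree V (cut_edges E (A i) (B i))) \<le> real d / 2 + real d powr (2 / 3)) \<and>
          (\<forall>u v. E u v \<longrightarrow>
             real t / 2 - real t powr (2 / 3) \<le> real (card {i \<in> {1..t}. cut_edges E (A i) (B i) u v}) \<and>
             real (card {i \<in> {1..t}. cut_edges E (A i) (B i) u v}) \<le> real t / 2 + real t powr (2 / 3))"
        by (rule main_construct[OF sg reg _ _ t1 td y1 y2 pD]) (use ev cV n in auto)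
    qed
  qed
qed

end
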